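(* Let $V$ be a consistent sequence ($FI_{\mathscr{H}}$-module) and $a\ge0$. If $S_{+a}V$ is generated in degree $\le d$ for some finite $d$, then $V$ is generated in finite degree (i.e. in degree $\le d'$ for some finite $d'$).
   Context: $\mathscr{H}_n$ is the Iwahori–Hecke algebra of $\mathfrak{S}_n$ over a field $k$ of characteristic $0$ with parameter $q$ not a root of unity; $\tau:\mathscr{H}_n\to\mathscr{H}_{n+1}$, $T_{s_i}\mapsto T_{s_i}$. A consistent sequence is $V=(V_n,\phi_n)$ with $V_n$ an $\mathscr{H}_n$-module and $\phi_n:V_n\to V_{n+1}$ $k$-linear with $\phi_n(hv)=\tau(h)\phi_n(v)$. $S_{+a}V$ has $(S_{+a}V)_n=V_{n+a}$, viewed as an $\mathscr{H}_n$-module by restriction along $\mathscr{H}_n\subseteq\mathscr{H}_{n+a}$, with maps $\phi_{n+a}$. With $\phi_{n-1,i}=\phi_{n-1}\circ\cdots\circ\phi_i$ and, for $S=\bigsqcup S_n$, $\mathrm{span}(S)_n$ the $\mathscr{H}_n$-submodule generated by $\bigcup_{i<n}\phi_{n-1,i}(S_i)\cup S_n$, $V$ is generated in degree $\le d$ if $\mathrm{span}(\bigsqcup_{j\le d}V_j)=V$; "finite degree" means generated in degree $\le d$ for some $d$. *)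

theory Defs
  imports Complex_Main
begin

text \<open>All vector spaces V_n are realised as subspaces of one ambient k-vector space
  of type 'v with scalar multiplication sc (this is no loss of generality).\<close>

definition lin_on :: "('k \<Rightarrow> 'v::ab_group_add \<Rightarrow> 'v) \<Rightarrow> 'v set \<Rightarrow> ('v \<Rightarrow> 'v) \<Rightarrow> 'v set \<Rightarrow> bool" where
  "lin_on sc A f B \<longleftrightarrow>
     (\<forall>x\<in>A. f x \<in> B) \<and>
     (\<forall>x\<in>A. \<forall>y\<in>A. f (x + y) = f x + f y) \<and>
     (\<forall>c. \<forall>x\<in>A. f (sc c x) = sc c (f x))"

text \<open>An H_n-module structure on the subspace M: operators T i for the generators
  T_{s_i}, 1 <= i < n, satisfying the defining relations of the Iwahori-Hecke algebra
  (T_i - q)(T_i + 1) = 0, braid relations, far commutation.\<close>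

definition hecke_module ::
  "'k::field \<Rightarrow> ('k \<Rightarrow> 'v::ab_group_add \<Rightarrow> 'v) \<Rightarrow> nat \<Rightarrow> 'v set \<Rightarrow> (nat \<Rightarrow> 'v \<Rightarrow> 'v) \<Rightarrow> bool" where
  "hecke_module q sc n M T \<longleftrightarrow>
     module.subspace sc M \<and>
     (\<forall>i. 1 \<le> i \<and> i < n \<longrightarrow> lin_on sc M (T i) M) \<and>
     (\<forall>i. \<forall>v\<in>M. 1 \<le> i \<and> i < n \<longrightarrow>
         T i (T i v) = sc (q - 1) (T i v) + sc q v) \<and>
     (\<forall>i. \<forall>v\<in>M. 1 \<le> i \<and> i + 1 < n \<longrightarrow>
         T i (T (i+1) (T i v)) = T (i+1) (T i (T (i+1) v))) \<and>
     (\<forall>i j. \<forall>v\<in>M. 1 \<le> i \<and> i < n \<and> 1 \<le> j \<and> j < n \<and> i + 2 \<le> j \<longrightarrow>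
         T i (T j v) = T j (T i v))"

definition consistent_seq ::
  "'k::field \<Rightarrow> ('k \<Rightarrow> 'v::ab_group_add \<Rightarrow> 'v) \<Rightarrow> (nat \<Rightarrow> 'v set) \<Rightarrow> (nat \<Rightarrow> nat \<Rightarrow> 'v \<Rightarrow> 'v)
     \<Rightarrow> (nat \<Rightarrow> 'v \<Rightarrow> 'v) \<Rightarrow> bool" where
  "consistent_seq q sc V T phi \<longleftrightarrow>
     (\<forall>n. hecke_module q sc n (V n) (T n)) \<and>
     (\<forall>n. lin_on sc (V n) (phi n) (V (Suc n))) \<and>
     (\<forall>n i. \<forall>v\<in>V n. 1 \<le> i \<and> i < n \<longrightarrow> phi n (T n i v) = T (Suc n) i (phi n v))"

fun phis :: "(nat \<Rightarrow> 'v \<Rightarrow> 'v) \<Rightarrow> nat \<Rightarrow> nat \<Rightarrow> 'v \<Rightarrow> 'v" where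
  "phis phi i 0 = id"
| "phis phi i (Suc j) = (if i \<le> j then phi j \<circ> phis phi i j else id)"

text \<open>The H_n-submodule generated by S: the smallest subspace containing S and
  stable under all T_{s_i}, 1 <= i < n (these generate H_n as a k-algebra).\<close>

definition hspan :: "('k::field \<Rightarrow> 'v::ab_group_add \<Rightarrow> 'v) \<Rightarrow> nat \<Rightarrow> (nat \<Rightarrow> 'v \<Rightarrow> 'v) \<Rightarrow> 'v set \<Rightarrow> 'v set" where
  "hspan sc n T S = \<Inter>{W. module.subspace sc W \<and> S \<subseteq> W \<and>
                           (\<forall>i. 1 \<le> i \<and> i < n \<longrightarrow> (\<forall>w\<in>W. T i w \<in> W))}"

definition seq_span ::
  "('k::field \<Rightarrow> 'v::ab_group_add \<Rightarrow> 'v) \<Rightarrow> (nat \<Rightarrow> nat \<Rightarrow> 'v \<Rightarrow> 'v) \<Rightarrow> (nat \<Rightarrow> 'v \<Rightarrow> 'v)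
     \<Rightarrow> (nat \<Rightarrow> 'v set) \<Rightarrow> nat \<Rightarrow> 'v set" where
  "seq_span sc T phi S n = hspan sc n (T n) ((\<Union>i<n. phis phi i n ` S i) \<union> S n)"

definition generated_in_degree_le ::
  "('k::field \<Rightarrow> 'v::ab_group_add \<Rightarrow> 'v) \<Rightarrow> (nat \<Rightarrow> 'v set) \<Rightarrow> (nat \<Rightarrow> nat \<Rightarrow> 'v \<Rightarrow> 'v)
     \<Rightarrow> (nat \<Rightarrow> 'v \<Rightarrow> 'v) \<Rightarrow> nat \<Rightarrow> bool" where
  "generated_in_degree_le sc V T phi d \<longleftrightarrow>
     (\<forall>n. seq_span sc T phi (\<lambda>j. if j \<le> d then V j else {}) n = V n)"

text \<open>The shift S_{+a}: degree n is V (n+a) restricted along H_n \<subseteq> H_{n+a}.\<close>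

definition shift_carrier :: "nat \<Rightarrow> (nat \<Rightarrow> 'v set) \<Rightarrow> nat \<Rightarrow> 'v set" where
  "shift_carrier a V n = V (n + a)"
definition shift_T :: "nat \<Rightarrow> (nat \<Rightarrow> nat \<Rightarrow> 'v \<Rightarrow> 'v) \<Rightarrow> nat \<Rightarrow> nat \<Rightarrow> 'v \<Rightarrow> 'v" where
  "shift_T a T n = T (n + a)"
definition shift_phi :: "nat \<Rightarrow> (nat \<Rightarrow> 'v \<Rightarrow> 'v) \<Rightarrow> nat \<Rightarrow> 'v \<Rightarrow> 'v" where
  "shift_phi a phi n = phi (n + a)"

end

theory Submission
  imports Defs
begin

lemma hspan_least:
  assumes "module.subspace sc W" "S \<subseteq> W" "\<forall>i. 1 \<le> i \<and> i < n \<longrightarrow> (\<forall>w\<in>W. T i w \<in> W)"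
  shows "hspan sc n T S \<subseteq> W"
  using assms unfolding hspan_def by blast

lemma hspan_sup: "S \<subseteq> hspan sc n T S"
  unfolding hspan_def by blast

lemma hspan_mono:
  assumes "m \<le> n" "S \<subseteq> S'"
  shows "hspan sc m T S \<subseteq> hspan sc n T S'"
proof -
  have "\<And>W. module.subspace sc W \<Longrightarrow> S' \<subseteq> W \<Longrightarrow> (\<forall>i. 1 \<le> i \<and> i < n \<longrightarrow> (\<forall>w\<in>W. T i w \<in> W)) \<Longrightarrow> hspan sc m T S \<subseteq> W"
    by (rule hspan_least) (use assms in auto)
  then show ?thesis unfolding hspan_def[of sc n] by blast
qed

lemma phis_id: "n \<le> i \<Longrightarrow> phis phi i n = id"
  by (induction n) auto

lemma phis_shift: "phis (shift_phi a phi) i m = phis phi (i+a) (m+a)"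
proof (induction m)
  case 0 then show ?case by (simp add: phis_id)
next
  case (Suc m) then show ?case by (auto simp add: shift_phi_def fun_eq_iff)
qed

lemma phis_mem:
  assumes "\<forall>n. lin_on sc (V n) (phi n) (V (Suc n))"
  shows "i \<le> n \<Longrightarrow> v \<in> V i \<Longrightarrow> phis phi i n v \<in> V n"
proof (induction n)
  case 0 then show ?case by simp
next
  case (Suc n)
  show ?case
  proof (cases "i \<le> n")
    case True
    then have "phis phi i n v \<in> V n" using Suc by simp
    then show ?thesis using True assms unfolding lin_on_def by auto
  next
    case False
    then have "i = Suc n" using Suc by simp
    then show ?thesis using Suc by simp
  qed
qed

theorem lemma5p3:
  fixes q :: "'k::field_char_0"
    and sc :: "'k \<Rightarrow> 'v::ab_group_add \<Rightarrow> 'v"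
    and V :: "nat \<Rightarrow> 'v set" and T :: "nat \<Rightarrow> nat \<Rightarrow> 'v \<Rightarrow> 'v" and phi :: "nat \<Rightarrow> 'v \<Rightarrow> 'v"
    and a d :: nat
  assumes "vector_space sc"
    and "q \<noteq> 0"
    and "\<forall>m::nat. m > 0 \<longrightarrow> q ^ m \<noteq> 1"
    and "consistent_seq q sc V T phi"
    and "generated_in_degree_le sc (shift_carrier a V) (shift_T a T) (shift_phi a phi) d"
  shows "\<exists>d'. generated_in_degree_le sc V T phi d'"
proof
  have hm: "\<And>n. hecke_module q sc n (V n) (T n)" and lin: "\<forall>n. lin_on sc (V n) (phi n) (V (Suc n))"
    using assms(4) unfolding consistent_seq_def by auto
  have sub: "\<And>n. module.subspace sc (V n)" using hm unfolding hecke_module_def by blast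
  have stab: "\<And>n. \<forall>i. 1 \<le> i \<and> i < n \<longrightarrow> (\<forall>w\<in>V n. T n i w \<in> V n)"
    using hm unfolding hecke_module_def lin_on_def by blast
  show "generated_in_degree_le sc V T phi (d + a)"
    unfolding generated_in_degree_le_def seq_span_def
  proof (intro allI equalityI)
    fix n
    let ?S = "(\<Union>i<n. phis phi i n ` (if i \<le> d + a then V i else {})) \<union> (if n \<le> d + a then V n else {})"
    have "?S \<subseteq> V n" using phis_mem[OF lin] by (auto split: if_splits)
    then show "hspan sc n (T n) ?S \<subseteq> V n" using hspan_least[OF sub _ stab] by blast
    show "V n \<subseteq> hspan sc n (T n) ?S"
    proof (cases "n \<le> d + a")
      case True
      then have "V n \<subseteq> ?S" by simp
      then show ?thesis using hspan_sup[of ?S sc n "T n"] by (rule subset_trans)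
    next
      case False
      define m where "m = n - a"
      have m: "n = m + a" "d < m" using False unfolding m_def by linarith+
      have "seq_span sc (shift_T a T) (shift_phi a phi)
              (\<lambda>j. if j \<le> d then shift_carrier a V j else {}) m = shift_carrier a V m"
        using assms(5) unfolding generated_in_degree_le_def by blast
      then have eq: "V n = hspan sc m (T n)
          ((\<Union>i<m. phis phi (i+a) n ` (if i \<le> d then V (i+a) else {})) \<union> (if m \<le> d then V (m+a) else {}))"
        unfolding seq_span_def shift_carrier_def shift_T_def phis_shift m(1) by (simp only: if_True if_False)
      have "((\<Union>i<m. phis phi (i+a) n ` (if i \<le> d then V (i+a) else {})) \<union> (if m \<le> d then V (m+a) else {}))
            \<subseteq> ?S"
      proof
        fix x assume "x \<in> ((\<Union>i<m. phis phi (i+a) n ` (if i \<le> d then V (i+a) else {})) \<union> (if m \<le> d then V (m+a) else {}))"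
        then obtain i v where "i < m" "i \<le> d" "v \<in> V (i+a)" "x = phis phi (i+a) n v" using m by (auto split: if_splits)
        then have "i + a \<in> {..<n}" "x \<in> phis phi (i+a) n ` (if i + a \<le> d + a then V (i+a) else {})"
          using m by auto
        then show "x \<in> ?S" by blast
      qed
      moreover have "m \<le> n" using m(1) by simp
      ultimately show ?thesis using eq hspan_mono[of m n _ _ sc "T n"] by simp
    qed
  qed
qed

end
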